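(* (Parity.) There exists an $n$-RASP-L program with $T(n)=n$ that solves the $n$-bit parity task: for every $n\ge 1$, every $n'\ge 0$ and every binary sequence $x_1,\dots,x_n\in\{0,1\}$, the program maps the input sequence $$x_1\,\dots\,x_n\;\texttt{>}\;\underbrace{\texttt{\#}\,\dots\,\texttt{\#}}_{n'}$$ (of length $n+1+n'$) to an output sequence of the same length of the form $$\underbrace{*\,\dots\,*}_{n}\; y\;\underbrace{\texttt{\#}\,\dots\,\texttt{\#}}_{n'},$$ where $y=x_1\oplus x_2\oplus\cdots\oplus x_n$ is the parity of the input bits.
   Context: Tokens: $\texttt{>}$ is a special end-of-query (EOQ) token, $\texttt{\#}$ is a special end-of-sequence (EOS) token, and $*$ in the output denotes a position whose value is ignored (any value is allowed there). RASP-L is a restricted programming language modelling decoder-only (causal) Transformers. A RASP-L program takes an integer-token sequence of arbitrary length and returns a sequence of the same length. It is straight-line code (no branching, no loops), each line being a call to a core primitive or to another RASP-L program. Core primitives: $\mathrm{indices}(x)$ (the sequence $0,1,\dots,|x|-1$); $\mathrm{full}(x,c)$ (constant sequence); elementwise maps applying a fixed function to the tokens at each position of one or more sequences; and the causal attention operation $\mathrm{kqv}(k,q,v,\mathrm{pred},\mathrm{default})$, whose output at position $i$ is the (integer-truncated) mean of $v_j$ over all $j\le i$ with $\mathrm{pred}(k_j,q_i)$ true, or $\mathrm{default}$ if no such $j$ exists. Operations on token indices are restricted to order comparisons and successor/predecessor (e.g. $\mathrm{indices}(x)+1$); arbitrary index arithmetic is not allowed. For example, shifting a sequence right by one position is $\mathrm{kqv}(\mathrm{indices}(x)+1,\mathrm{indices}(x),x,=,0)$.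 An $n$-RASP-L program is a program $P$ for which there exist a function $T:\mathbb{N}\to\mathbb{N}$ and a RASP-L program $P'$ such that, on inputs of problem size $n$, $P$ consists of the sequential application of $P'$ for $T(n)$ steps (the paper allows fixed RASP-L pre-processing and post-processing steps, e.g. handling EOS/EOQ tokens, outside this loop). *)

theory Defs
  imports Main
begin

text \<open>Tokens are integers. The special tokens: EOQ ('>') and EOS ('#').
  They are distinct from the bit tokens 0 and 1.\<close>

definition EOQ :: int where "EOQ = 2"
definition EOS :: int where "EOS = 3"

text \<open>Index-valued sequences may only be compared (order comparisons) or shifted by +1/-1;
  arbitrary elementwise maps are only allowed on token-valued sequences.\<close>

datatype kind = Tk | Ix

datatype cmp = CEq | CNe | CLt | CLe | CGt | CGe

fun cmp_sem :: "cmp \<Rightarrow> int \<Rightarrow> int \<Rightarrow> bool" where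
  "cmp_sem CEq a b = (a = b)"
| "cmp_sem CNe a b = (a \<noteq> b)"
| "cmp_sem CLt a b = (a < b)"
| "cmp_sem CLe a b = (a \<le> b)"
| "cmp_sem CGt a b = (a > b)"
| "cmp_sem CGe a b = (a \<ge> b)"

text \<open>Variables are referred to by number:
  variable 0 is the input sequence, variable m+1 is the result of the m-th instruction.
  \<^item> Indices a: the sequence 0,1,...,|x_a|-1
  \<^item> Full a c: constant sequence of length |x_a|
  \<^item> Map f as: elementwise map of a fixed function over token sequences
  \<^item> Succ a / Pred a: indices +1 / -1
  \<^item> CmpIdx c a b: elementwise order comparison of two index sequences (result 0/1)
  \<^item> KQV k q v pred d: causal attention with token keys/queries and arbitrary predicate
  \<^item> KQVIdx c k q v d: causal attention with index keys/queries and an order comparison\<close>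

datatype instr =
    Indices nat
  | Full nat int
  | Map "int list \<Rightarrow> int" "nat list"
  | Succ nat
  | Pred nat
  | CmpIdx cmp nat nat
  | KQV nat nat nat "int \<Rightarrow> int \<Rightarrow> bool" int
  | KQVIdx cmp nat nat nat int

type_synonym rasp_prog = "instr list"

text \<open>Integer-truncated (towards zero) division used for the mean.\<close>
definition tdiv :: "int \<Rightarrow> int \<Rightarrow> int" where
  "tdiv s c = sgn s * (\<bar>s\<bar> div c)"

definition attn :: "(nat \<Rightarrow> bool) \<Rightarrow> int list \<Rightarrow> nat \<Rightarrow> int \<Rightarrow> int" where
  "attn sel vs i d =
     (let J = filter sel [0..<Suc i] in
      if J = [] then d else tdiv (sum_list (map (\<lambda>j. vs ! j) J)) (int (length J)))"

fun ieval :: "int list list \<Rightarrow> instr \<Rightarrow> int list" where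
  "ieval env (Indices a) = map int [0..<length (env ! a)]"
| "ieval env (Full a c) = replicate (length (env ! a)) c"
| "ieval env (Map f as) = map (\<lambda>i. f (map (\<lambda>a. env ! a ! i) as)) [0..<length (env ! 0)]"
| "ieval env (Succ a) = map (\<lambda>x. x + 1) (env ! a)"
| "ieval env (Pred a) = map (\<lambda>x. x - 1) (env ! a)"
| "ieval env (CmpIdx c a b) =
     map (\<lambda>i. if cmp_sem c (env ! a ! i) (env ! b ! i) then 1 else 0) [0..<length (env ! 0)]"
| "ieval env (KQV k q v p d) =
     map (\<lambda>i. attn (\<lambda>j. p (env ! k ! j) (env ! q ! i)) (env ! v) i d) [0..<length (env ! 0)]"
| "ieval env (KQVIdx c k q v d) =
     map (\<lambda>i. attn (\<lambda>j. cmp_sem c (env ! k ! j) (env ! q ! i)) (env ! v) i d) [0..<length (env ! 0)]"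

definition run :: "rasp_prog \<Rightarrow> int list \<Rightarrow> int list" where
  "run p xs = last (fold (\<lambda>ins env. env @ [ieval env ins]) p [xs])"

fun ikind :: "instr \<Rightarrow> kind" where
  "ikind (Indices _) = Ix"
| "ikind (Succ _) = Ix"
| "ikind (Pred _) = Ix"
| "ikind _ = Tk"

fun ins_ok :: "kind list \<Rightarrow> instr \<Rightarrow> bool" where
  "ins_ok ks (Indices a) = (a < length ks)"
| "ins_ok ks (Full a c) = (a < length ks)"
| "ins_ok ks (Map f as) = (\<forall>a\<in>set as. a < length ks \<and> ks ! a = Tk)"
| "ins_ok ks (Succ a) = (a < length ks \<and> ks ! a = Ix)"
| "ins_ok ks (Pred a) = (a < length ks \<and> ks ! a = Ix)"
| "ins_ok ks (CmpIdx c a b) = (a < length ks \<and> ks ! a = Ix \<and> b < length ks \<and> ks ! b = Ix)"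
| "ins_ok ks (KQV k q v p d) =
     (k < length ks \<and> ks ! k = Tk \<and> q < length ks \<and> ks ! q = Tk \<and> v < length ks \<and> ks ! v = Tk)"
| "ins_ok ks (KQVIdx c k q v d) =
     (k < length ks \<and> ks ! k = Ix \<and> q < length ks \<and> ks ! q = Ix \<and> v < length ks \<and> ks ! v = Tk)"

fun ok_from :: "kind list \<Rightarrow> rasp_prog \<Rightarrow> bool" where
  "ok_from ks [] = (last ks = Tk)"
| "ok_from ks (i # is) = (ins_ok ks i \<and> ok_from (ks @ [ikind i]) is)"

definition rasp_l :: "rasp_prog \<Rightarrow> bool" where
  "rasp_l p = ok_from [Tk] p"

definition n_rasp_run ::
  "rasp_prog \<Rightarrow> rasp_prog \<Rightarrow> rasp_prog \<Rightarrow> (nat \<Rightarrow> nat) \<Rightarrow> nat \<Rightarrow> int list \<Rightarrow> int list" where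
  "n_rasp_run pre step post T n xs = run post ((run step ^^ T n) (run pre xs))"

end

theory Submission
  imports Defs
begin

definition fstep :: "int list \<Rightarrow> int" where
  "fstep l = (let c = l!0; p = l!1 in
     if p \<in> {100,101} \<and> c \<in> {0,1} then 100 + (c + p) mod 2
     else if p \<in> {100,101} \<and> c = 2 then p + 100 else c)"

definition gpost :: "int list \<Rightarrow> int" where
  "gpost l = (if l!0 \<ge> 200 then l!0 - 200 else l!0)"

definition stepP :: rasp_prog where
  "stepP = [Indices 0, Succ 1, KQVIdx CEq 2 1 0 100, Map fstep [0,3]]"

definition postP :: rasp_prog where
  "postP = [Map gpost [0]]"

definition F :: "int list \<Rightarrow> int list" where
  "F s = map (\<lambda>i. fstep [s!i, if i = 0 then 100 else s!(i-1)]) [0..<length s]"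

lemma filt: "filter (\<lambda>j. int j + 1 = int i) [0..<Suc i] = (if i = 0 then [] else [i-1])"
proof (cases i)
  case 0 then show ?thesis by simp
next
  case (Suc m)
  have "filter (\<lambda>j. int j + 1 = int i) [0..<Suc i] = filter (\<lambda>j. j = m) [0..<Suc i]"
    by (rule filter_cong) (auto simp: Suc)
  also have "\<dots> = [m]" using Suc
    by (simp add: filter_eq_Cons_iff)
  finally show ?thesis using Suc by simp
qed

lemma attn_prev:
  assumes "i < length s"
  shows "attn (\<lambda>j. cmp_sem CEq (map ((\<lambda>x. x + 1) \<circ> int) [0..<length s] ! j) (int i)) s i 100
     = (if i = 0 then 100 else s!(i-1))"
proof -
  have "filter (\<lambda>j. cmp_sem CEq (map ((\<lambda>x. x + 1) \<circ> int) [0..<length s] ! j) (int i)) [0..<Suc i]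
     = filter (\<lambda>j. int j + 1 = int i) [0..<Suc i]"
    by (rule filter_cong) (use assms in auto)
  also have "\<dots> = (if i = 0 then [] else [i-1])" by (rule filt)
  finally have eq: "filter (\<lambda>j. cmp_sem CEq (map ((\<lambda>x. x + 1) \<circ> int) [0..<length s] ! j) (int i)) [0..<Suc i]
     = (if i = 0 then [] else [i-1])" .
  show ?thesis unfolding attn_def Let_def eq by (simp add: tdiv_def sgn_mult_abs)
qed

lemma run_step: "run stepP s = F s"
  unfolding run_def stepP_def F_def
  apply (simp add: nth_append del: cmp_sem.simps)
  using attn_prev[of 0 s] attn_prev[of _ s]
  by (auto simp del: cmp_sem.simps)

lemma run_post: "run postP s = map (\<lambda>t. if t \<ge> 200 then t - 200 else t) s"
  unfolding run_def postP_def
  by (auto simp: gpost_def intro!: nth_equalityI)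

definition stv :: "int list \<Rightarrow> nat \<Rightarrow> nat \<Rightarrow> int" where
  "stv xs k i = (if i < length xs then (if i < k then 100 + sum_list (take (i+1) xs) mod 2 else xs!i)
      else if i = length xs then (if k > length xs then 200 + sum_list xs mod 2 else 2) else 3)"

definition st :: "int list \<Rightarrow> nat \<Rightarrow> nat \<Rightarrow> int list" where
  "st xs n' k = map (stv xs k) [0..<length xs+1+n']"

lemma st_nth: "i < length xs+1+n' \<Longrightarrow> st xs n' k ! i = stv xs k i"
  unfolding st_def by (simp del: upt_Suc)

lemma st_len: "length (st xs n' k) = length xs+1+n'"
  unfolding st_def by simp

lemma st0: "st xs n' 0 = xs @ [EOQ] @ replicate n' EOS"
  unfolding st_def stv_def EOQ_def EOS_def
  by (intro nth_equalityI) (auto simp: nth_append)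

lemma bit: "set xs \<subseteq> {0,1} \<Longrightarrow> i < length xs \<Longrightarrow> xs!i = 0 \<or> xs!i = 1"
  using nth_mem by blast

lemma stS:
  assumes b': "set xs \<subseteq> {0,1}" and ne: "xs \<noteq> []" and k: "k \<le> length xs"
  shows "F (st xs n' k) = st xs n' (Suc k)"
proof (intro nth_equalityI)
  show "length (F (st xs n' k)) = length (st xs n' (Suc k))" by (simp add: F_def st_len)
next
  fix i assume i: "i < length (F (st xs n' k))"
  hence il: "i < length xs + 1 + n'" by (simp add: F_def st_len)
  have L: "F (st xs n' k) ! i = fstep [stv xs k i, if i = 0 then 100 else stv xs k (i-1)]"
    using il by (simp add: F_def st_len st_nth del: upt_Suc)
  have P: "\<And>j. j < length xs \<Longrightarrow> sum_list (take (Suc j) xs) = sum_list (take j xs) + xs!j"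
    by (simp add: take_Suc_conv_app_nth)
  show "F (st xs n' k) ! i = st xs n' (Suc k) ! i"
  proof -
    have m2: "\<And>a::int. 0 \<le> a mod 2 \<and> a mod 2 < 2" by simp
    consider (a) "i < length xs" "i < k" | (b) "i < length xs" "i = k" | (c) "i < length xs" "i > k"
      | (d) "i = length xs" "k = length xs" | (e) "i = length xs" "k < length xs" | (f) "i > length xs"
      using k by linarith
    then show ?thesis
    proof cases
      case a
      have "stv xs k i = 100 + sum_list (take (i+1) xs) mod 2" using a by (simp add: stv_def)
      moreover have "stv xs (Suc k) i = 100 + sum_list (take (i+1) xs) mod 2" using a by (simp add: stv_def)
      ultimately show ?thesis using m2[of "sum_list (take (i+1) xs)"] unfolding L st_nth[OF il] fstep_def Let_def by auto
    next
      case b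
      have c: "stv xs k i = xs!i" using b by (simp add: stv_def)
      have t: "stv xs (Suc k) i = 100 + (sum_list (take i xs) + xs!i) mod 2" using b P by (simp add: stv_def)
      have p: "(if i = 0 then 100 else stv xs k (i-1)) = 100 + sum_list (take i xs) mod 2"
        using b by (cases i) (auto simp: stv_def)
      have "(xs ! i + (100 + sum_list (take i xs) mod 2)) mod 2 = (sum_list (take i xs) + xs ! i) mod 2"
        by presburger
      then show ?thesis unfolding L st_nth[OF il] c t p using bit[OF b' b(1)] m2[of "sum_list (take i xs)"]
        unfolding L st_nth[OF il] fstep_def Let_def by auto
    next
      case c
      have cc: "stv xs k i = xs!i" "stv xs (Suc k) i = xs!i" using c by (auto simp: stv_def)
      have p: "(if i = 0 then 100 else stv xs k (i-1)) = xs!(i-1)" using c by (auto simp: stv_def)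
      have im: "i - 1 < length xs" using c by simp
      show ?thesis unfolding L st_nth[OF il] cc p using bit[OF b' c(1)] bit[OF b' im] c
        unfolding L st_nth[OF il] fstep_def Let_def by auto
    next
      case d
      have cc: "stv xs k i = 2" "stv xs (Suc k) i = 200 + sum_list xs mod 2" using d by (auto simp: stv_def)
      have p: "(if i = 0 then 100 else stv xs k (i-1)) = 100 + sum_list xs mod 2"
        using d ne by (auto simp: stv_def)
      show ?thesis unfolding L st_nth[OF il] cc p using m2[of "sum_list xs"]
        unfolding L st_nth[OF il] fstep_def Let_def by auto
    next
      case e
      have cc: "stv xs k i = 2" "stv xs (Suc k) i = 2" using e by (auto simp: stv_def)
      have p: "(if i = 0 then 100 else stv xs k (i-1)) = xs!(i-1)" using e ne by (auto simp: stv_def)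
      show ?thesis unfolding L st_nth[OF il] cc p using bit[OF b', of "i-1"] e ne
        unfolding L st_nth[OF il] fstep_def Let_def by auto
    next
      case f
      have cc: "stv xs k i = 3" "stv xs (Suc k) i = 3" using f by (auto simp: stv_def)
      show ?thesis unfolding L st_nth[OF il] cc unfolding L st_nth[OF il] fstep_def Let_def by auto
    qed
  qed
qed

theorem proposition1:
  "\<exists>pre step post. rasp_l pre \<and> rasp_l step \<and> rasp_l post \<and>
     (\<forall>n n' (xs :: int list). n \<ge> 1 \<longrightarrow> length xs = n \<longrightarrow> set xs \<subseteq> {0, 1} \<longrightarrow>
        (let inp = xs @ [EOQ] @ replicate n' EOS;
             out = n_rasp_run pre step post (\<lambda>m. m) n inp
         in length out = n + 1 + n' \<and>
            out ! n = (sum_list xs) mod 2 \<and>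
            (\<forall>j < n'. out ! (n + 1 + j) = EOS)))"
proof (rule exI[of _ stepP], rule exI[of _ stepP], rule exI[of _ postP], intro conjI allI impI)
  show "rasp_l stepP" by (simp add: rasp_l_def stepP_def)
  show "rasp_l stepP" by (simp add: rasp_l_def stepP_def)
  show "rasp_l postP" by (simp add: rasp_l_def postP_def)
  fix n n' and xs :: "int list"
  assume n: "n \<ge> 1" and len: "length xs = n" and b: "set xs \<subseteq> {0,1}"
  have ne: "xs \<noteq> []" using n len by auto
  have it: "k \<le> Suc n \<Longrightarrow> (F ^^ k) (xs @ [EOQ] @ replicate n' EOS) = st xs n' k" for k
  proof (induction k)
    case 0 then show ?case by (simp add: st0)
  next
    case (Suc k)
    then show ?case using stS[OF b ne, of k n'] n len by auto
  qed
  have eq: "n_rasp_run stepP stepP postP (\<lambda>m. m) n (xs @ [EOQ] @ replicate n' EOS)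
     = map (\<lambda>t. if t \<ge> 200 then t - 200 else t) (st xs n' (Suc n))"
  proof -
    have "(F^^n) (F (xs @ [EOQ] @ replicate n' EOS)) = (F^^Suc n) (xs @ [EOQ] @ replicate n' EOS)"
      by (simp add: funpow_Suc_right del: funpow.simps)
    moreover have "(F^^Suc n) (xs @ [EOQ] @ replicate n' EOS) = st xs n' (Suc n)" by (rule it) simp
    moreover have rs: "run stepP = F" by (rule ext, rule run_step)
    ultimately show ?thesis unfolding n_rasp_run_def run_post rs by simp
  qed
  show "let inp = xs @ [EOQ] @ replicate n' EOS;
             out = n_rasp_run stepP stepP postP (\<lambda>m. m) n inp
         in length out = n + 1 + n' \<and>
            out ! n = (sum_list xs) mod 2 \<and>
            (\<forall>j < n'. out ! (n + 1 + j) = EOS)"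
    unfolding Let_def eq using len by (simp add: st_len st_nth stv_def EOS_def del: upt_Suc)
qed

end
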